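(* Let $G$ be a finite group and $K$ a field in which $|G|$ is invertible. Let $V\le G$ and let $(f_U)_{U\in\widehat\Sigma_G}=\sigma_G(\Delta(e_V))$. If $U\in\widehat\Sigma_G$ is not isomorphic to $V$ then $f_U=0$. If $U\in\widehat\Sigma_G$ is isomorphic to $V$ then $f_U$ is the projection of $K\overline{\mathrm{Inj}}(U,G)=\bigoplus_{C}K\overline{\mathrm{Inj}}(U,G)_C$ onto the summand indexed by the $G$-conjugacy class $C$ of $V$, where $C$ runs over the $G$-conjugacy classes of subgroups of $G$ isomorphic to $U$ and $K\overline{\mathrm{Inj}}(U,G)_C$ is spanned by the $[\lambda]$ with $\lambda(U)\in C$.
   Context: $B(G)$ is the Burnside ring with marks $\Phi_H([X])=|X^H|$; $e_V\in KB(G)$ is the element with $\Phi_{V'}(e_V)=1$ if $V'$ is $G$-conjugate to $V$ and $0$ otherwise. Finite $(G,G)$-bisets are left $G\times G$-sets via $(g,h)x=gxh^{-1}$; $B^\Delta(G,G)$ is the Grothendieck ring (product induced by $X\times_G Y$) of bisets whose point stabilizers $L$ satisfy $\{g\mid(g,1)\in L\}=\{g\mid(1,g)\in L\}=1$; $\Phi_L$ denotes marks on $G\times G$-sets. $\Delta\colon KB(G)\to KB^\Delta(G,G)$ is the $K$-linear ring homomorphism $[G/W]\mapsto[G\times G/\{(w,w)\mid w\in W\}]$. $\mathrm{Inj}(U,G)$: injective homomorphisms $U\to G$ with $G$ acting by $\lambda\mapsto c_g\lambda$ and $\mathrm{Aut}(U)$ on the right by composition; $\overline{\mathrm{Inj}}(U,G)=G\backslash\mathrm{Inj}(U,G)$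 (elements $[\lambda]$), a right $\mathrm{Out}(U)$-set. $\widehat\Sigma_G$: representatives of isomorphism classes of subgroups of $G$. $\sigma_G\colon KB^\Delta(G,G)\to\prod_{U\in\widehat\Sigma_G}\mathrm{End}_{K\mathrm{Out}(U)}(K\overline{\mathrm{Inj}}(U,G))$ is $a\mapsto\bigl([\mu]\mapsto\sum_{[\lambda]\in\overline{\mathrm{Inj}}(U,G)}\frac{\Phi_{\{(\lambda(u),\mu(u))\mid u\in U\}}(a)}{|C_G(\lambda(U))|}[\lambda]\bigr)_U$. *)

theory Defs
  imports "HOL-Algebra.Algebra"
begin

definition lcosets_of :: "('a, 'b) monoid_scheme \<Rightarrow> 'a set \<Rightarrow> 'a set set" where
  "lcosets_of G H = (\<lambda>g. l_coset G g H) ` carrier G"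

definition fixed_cosets :: "('a, 'b) monoid_scheme \<Rightarrow> 'a set \<Rightarrow> 'a set \<Rightarrow> 'a set set" where
  "fixed_cosets G H L = {Z. Z \<in> lcosets_of G H \<and> (\<forall>y\<in>L. l_coset G y Z = Z)}"

(* An element a = sum_W c(W) [G/W] of KB(G) is given by a coefficient function c
   on subgroups.  Its mark at H: Phi_H(a) = sum_W c(W) |(G/W)^H|. *)
definition markB :: "('a, 'b) monoid_scheme \<Rightarrow> ('a set \<Rightarrow> 'k::field) \<Rightarrow> 'a set \<Rightarrow> 'k" where
  "markB G c H = (\<Sum>W\<in>{W. subgroup W G}. c W * of_nat (card (fixed_cosets G W H)))"

definition diag :: "'a set \<Rightarrow> ('a \<times> 'a) set" where
  "diag W = (\<lambda>w. (w, w)) ` W"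

(* Marks of Delta(a) = sum_W c(W) [G x G / Delta W] at a subgroup L of G x G *)
definition markDelta :: "('a, 'b) monoid_scheme \<Rightarrow> ('a set \<Rightarrow> 'k::field) \<Rightarrow> ('a \<times> 'a) set \<Rightarrow> 'k" where
  "markDelta G c L = (\<Sum>W\<in>{W. subgroup W G}. c W * of_nat (card (fixed_cosets (G \<times>\<times> G) (diag W) L)))"

definition conjugate :: "('a, 'b) monoid_scheme \<Rightarrow> 'a set \<Rightarrow> 'a set \<Rightarrow> bool" where
  "conjugate G V' V = (\<exists>g\<in>carrier G. V' = (\<lambda>v. g \<otimes>\<^bsub>G\<^esub> v \<otimes>\<^bsub>G\<^esub> inv\<^bsub>G\<^esub> g) ` V)"

definition Inj :: "('a, 'b) monoid_scheme \<Rightarrow> 'a set \<Rightarrow> ('a \<Rightarrow> 'a) set" where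
  "Inj G U = {l. l \<in> extensional U \<and> l \<in> hom (G\<lparr>carrier := U\<rparr>) G \<and> inj_on l U}"

definition InjBar :: "('a, 'b) monoid_scheme \<Rightarrow> 'a set \<Rightarrow> ('a \<Rightarrow> 'a) set set" where
  "InjBar G U = (\<lambda>l. {restrict (\<lambda>u. g \<otimes>\<^bsub>G\<^esub> l u \<otimes>\<^bsub>G\<^esub> inv\<^bsub>G\<^esub> g) U | g. g \<in> carrier G}) ` Inj G U"

definition centralizer_of :: "('a, 'b) monoid_scheme \<Rightarrow> 'a set \<Rightarrow> 'a set" where
  "centralizer_of G S = {g. g \<in> carrier G \<and> (\<forall>x\<in>S. g \<otimes>\<^bsub>G\<^esub> x = x \<otimes>\<^bsub>G\<^esub> g)}"

(* coefficient of [lambda] in sigma_G(Delta a)_U([mu]) *)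
definition sigma_entry :: "('a, 'b) monoid_scheme \<Rightarrow> ('a set \<Rightarrow> 'k::field) \<Rightarrow> 'a set
    \<Rightarrow> ('a \<Rightarrow> 'a) set \<Rightarrow> ('a \<Rightarrow> 'a) set \<Rightarrow> 'k" where
  "sigma_entry G c U Lam M =
     (let l = (SOME l. l \<in> Lam); m = (SOME m. m \<in> M)
      in markDelta G c ((\<lambda>u. (l u, m u)) ` U) / of_nat (card (centralizer_of G (l ` U))))"

(* the K-linear endomorphism f_U of K\<overline>Inj(U,G) (vectors = functions InjBar -> K),
   [mu] \<mapsto> sum_[lambda] entry [lambda], extended linearly *)
definition sigma_apply :: "('a, 'b) monoid_scheme \<Rightarrow> ('a set \<Rightarrow> 'k::field) \<Rightarrow> 'a set
    \<Rightarrow> (('a \<Rightarrow> 'a) set \<Rightarrow> 'k) \<Rightarrow> (('a \<Rightarrow> 'a) set \<Rightarrow> 'k)" where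
  "sigma_apply G c U x = (\<lambda>Lam. if Lam \<in> InjBar G U
      then (\<Sum>M\<in>InjBar G U. x M * sigma_entry G c U Lam M) else 0)"

end

theory Submission
  imports Defs
begin

lemma (in group) lcoset_fixed_iff:
  assumes H: "subgroup H G" and x: "x \<in> carrier G" and y: "y \<in> carrier G"
  shows "(y <# (x <# H) = x <# H) \<longleftrightarrow> inv x \<otimes> y \<otimes> x \<in> H"
proof -
  have Hc: "H \<subseteq> carrier G" using H subgroup.subset by blast
  have e: "y <# (x <# H) = (y \<otimes> x) <# H" using lcos_m_assoc[OF Hc y x] .
  show ?thesis
  proof
    assume "y <# (x <# H) = x <# H"
    hence "(y \<otimes> x) <# H = x <# H" using e by simp
    moreover have "y \<otimes> x \<in> (y \<otimes> x) <# H" using lcos_self[OF _ H] x y by simp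
    ultimately have "y \<otimes> x \<in> x <# H" by simp
    hence "inv x \<otimes> (y \<otimes> x) \<in> H" using subgroup.lcos_module_imp[OF H is_group x] by blast
    thus "inv x \<otimes> y \<otimes> x \<in> H" using x y by (simp add: m_assoc)
  next
    assume "inv x \<otimes> y \<otimes> x \<in> H"
    hence "inv x \<otimes> (y \<otimes> x) \<in> H" using x y by (simp add: m_assoc)
    hence "y \<otimes> x \<in> x <# H" using subgroup.lcos_module_rev[OF H is_group x] x y by blast
    hence "x <# H = (y \<otimes> x) <# H" using l_repr_independence[OF _ x H] by blast
    thus "y <# (x <# H) = x <# H" using e by simp
  qed
qed

lemma (in group) card_fixed_cosets:
  assumes H: "subgroup H G" and fin: "finite (carrier G)" and L: "L \<subseteq> carrier G"
  shows "card (fixed_cosets G H L) * card H = card {x \<in> carrier G. \<forall>y\<in>L. inv x \<otimes> y \<otimes> x \<in> H}"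
proof -
  have Hc: "H \<subseteq> carrier G" using H subgroup.subset by blast
  let ?C = "fixed_cosets G H L"
  have lc: "lcosets_of G H = lcosets H" unfolding lcosets_of_def LCOSETS_def by auto
  have sub: "?C \<subseteq> lcosets H" unfolding fixed_cosets_def lc by auto
  have U: "\<Union>?C = {x \<in> carrier G. \<forall>y\<in>L. inv x \<otimes> y \<otimes> x \<in> H}"
  proof safe
    fix z Z assume zZ: "z \<in> Z" and ZC: "Z \<in> ?C"
    then obtain x where x: "x \<in> carrier G" and Z: "Z = x <# H" and fx: "\<forall>y\<in>L. y <# Z = Z"
      unfolding fixed_cosets_def lcosets_of_def by auto
    have zc: "z \<in> carrier G" using zZ Z x H l_coset_carrier by blast
    have Zz: "Z = z <# H" using l_repr_independence[OF _ x H] zZ Z by blast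
    show "z \<in> carrier G" by (rule zc)
    fix y assume "y \<in> L"
    hence "y <# (z <# H) = z <# H" using fx Zz by simp
    thus "inv z \<otimes> y \<otimes> z \<in> H" using lcoset_fixed_iff[OF H zc] \<open>y \<in> L\<close> L by blast
  next
    fix x assume x: "x \<in> carrier G" and h: "\<forall>y\<in>L. inv x \<otimes> y \<otimes> x \<in> H"
    have "x <# H \<in> ?C" unfolding fixed_cosets_def lcosets_of_def
      using x h lcoset_fixed_iff[OF H x] L by auto
    moreover have "x \<in> x <# H" using lcos_self[OF x H] .
    ultimately show "x \<in> \<Union>?C" by blast
  qed
  have finC: "finite ?C" using sub lcosets_subset_PowG[OF H] fin
    by (meson finite_Pow_iff finite_subset)
  have h1: "finite (\<Union>?C)" using U fin by simp
  have h2: "\<forall>c\<in>?C. card c = card H" using sub l_card_cosets_equal[OF _ Hc fin] by (metis subsetD)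
  have h3: "\<forall>c1\<in>?C. \<forall>c2\<in>?C. c1 \<noteq> c2 \<longrightarrow> c1 \<inter> c2 = {}" using sub lcos_disjoint[OF H] by blast
  have "card H * card ?C = card (\<Union>?C)" using card_partition[OF finC h1] h2 h3 by blast
  thus ?thesis using U by (simp add: mult.commute)
qed


lemma (in group) conj_mult:
  assumes "k \<in> carrier G" "h \<in> carrier G" "x \<in> carrier G"
  shows "inv (k \<otimes> h) \<otimes> x \<otimes> (k \<otimes> h) = inv h \<otimes> (inv k \<otimes> x \<otimes> k) \<otimes> h"
  using assms by (simp add: inv_mult_group m_assoc)

lemma (in group) conj_cancel:
  assumes "h \<in> carrier G" "a \<in> carrier G" "b \<in> carrier G"
    and "inv h \<otimes> a \<otimes> h = inv h \<otimes> b \<otimes> h"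
  shows "a = b"
  using assms by simp

lemma diag_mem: "(a, b) \<in> diag W \<longleftrightarrow> a = b \<and> b \<in> W"
  by (auto simp: diag_def)

lemma diag_subgroup:
  assumes G: "group G" and W: "subgroup W G"
  shows "subgroup (diag W) (G \<times>\<times> G)"
proof -
  interpret group G by fact
  interpret P: group "G \<times>\<times> G" by (rule DirProd_group[OF G G])
  show ?thesis
  proof (rule P.subgroupI)
    show "diag W \<subseteq> carrier (G \<times>\<times> G)" using subgroup.subset[OF W] unfolding diag_def by auto
    show "diag W \<noteq> {}" using subgroup.one_closed[OF W] unfolding diag_def by auto
    fix a assume "a \<in> diag W"
    then obtain w where "w \<in> W" "a = (w, w)" unfolding diag_def by auto
    moreover have "w \<in> carrier G" using \<open>w \<in> W\<close> subgroup.subset[OF W] by auto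
    ultimately show "inv\<^bsub>G \<times>\<times> G\<^esub> a \<in> diag W" using inv_DirProd[OF G G] subgroup.m_inv_closed[OF W]
      unfolding diag_def by auto
  next
    fix a b assume "a \<in> diag W" "b \<in> diag W"
    thus "a \<otimes>\<^bsub>G \<times>\<times> G\<^esub> b \<in> diag W" using subgroup.m_closed[OF W] unfolding diag_def by auto
  qed
qed

definition Kset :: "('a, 'b) monoid_scheme \<Rightarrow> 'a set \<Rightarrow> ('a \<Rightarrow> 'a) \<Rightarrow> ('a \<Rightarrow> 'a) \<Rightarrow> 'a set" where
  "Kset G U l m = {k \<in> carrier G. \<forall>u\<in>U. inv\<^bsub>G\<^esub> k \<otimes>\<^bsub>G\<^esub> l u \<otimes>\<^bsub>G\<^esub> k = m u}"

lemma (in group) card_fixed_diag: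
  assumes fin: "finite (carrier G)" and W: "subgroup W G"
    and l: "l ` U \<subseteq> carrier G" and m: "m ` U \<subseteq> carrier G"
  shows "card (fixed_cosets (G \<times>\<times> G) (diag W) ((\<lambda>u. (l u, m u)) ` U))
       = card (Kset G U l m) * card (fixed_cosets G W (m ` U))"
proof -
  have G: "group G" by (rule is_group)
  interpret P: group "G \<times>\<times> G" by (rule DirProd_group[OF G G])
  let ?L = "(\<lambda>u. (l u, m u)) ` U"
  let ?A2 = "{x \<in> carrier (G \<times>\<times> G). \<forall>y\<in>?L. inv\<^bsub>G \<times>\<times> G\<^esub> x \<otimes>\<^bsub>G \<times>\<times> G\<^esub> y \<otimes>\<^bsub>G \<times>\<times> G\<^esub> x \<in> diag W}"
  let ?A1 = "{x \<in> carrier G. \<forall>y\<in>m ` U. inv x \<otimes> y \<otimes> x \<in> W}"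
  let ?K = "Kset G U l m"
  have Wc: "W \<subseteq> carrier G" using subgroup.subset[OF W] .
  have e2: "card (fixed_cosets (G \<times>\<times> G) (diag W) ?L) * card (diag W) = card ?A2"
    by (rule P.card_fixed_cosets[OF diag_subgroup[OF G W]]) (use fin l m in auto)
  have e1: "card (fixed_cosets G W (m ` U)) * card W = card ?A1"
    by (rule card_fixed_cosets[OF W fin m])
  have cd: "card (diag W) = card W" unfolding diag_def by (rule card_image) (auto simp: inj_on_def)
  have memA2: "(g, h) \<in> ?A2 \<longleftrightarrow> g \<in> carrier G \<and> h \<in> carrier G \<and>
      (\<forall>u\<in>U. inv g \<otimes> l u \<otimes> g = inv h \<otimes> m u \<otimes> h \<and> inv h \<otimes> m u \<otimes> h \<in> W)" for g h
  proof (cases "g \<in> carrier G \<and> h \<in> carrier G")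
    case True
    hence "inv\<^bsub>G \<times>\<times> G\<^esub> (g, h) = (inv g, inv h)" using inv_DirProd[OF G G] by blast
    hence "(g, h) \<in> ?A2 \<longleftrightarrow> (\<forall>u\<in>U. (inv g \<otimes> l u \<otimes> g, inv h \<otimes> m u \<otimes> h) \<in> diag W)"
      using True by simp
    also have "\<dots> \<longleftrightarrow> (\<forall>u\<in>U. inv g \<otimes> l u \<otimes> g = inv h \<otimes> m u \<otimes> h \<and> inv h \<otimes> m u \<otimes> h \<in> W)"
      by (simp add: diag_mem)
    finally show ?thesis using True by simp
  next
    case False
    then show ?thesis by auto
  qed
  have A2: "?A2 = (\<lambda>(k, h). (k \<otimes> h, h)) ` (?K \<times> ?A1)"
  proof (rule Set.set_eqI)
    fix p :: "'a \<times> 'a"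
    obtain g h where p: "p = (g, h)" by force
    show "p \<in> ?A2 \<longleftrightarrow> p \<in> (\<lambda>(k, h). (k \<otimes> h, h)) ` (?K \<times> ?A1)"
    proof
      assume "p \<in> ?A2"
      hence "(g, h) \<in> ?A2" using p by (simp only:)
      hence gh: "g \<in> carrier G" "h \<in> carrier G" and
        c: "\<forall>u\<in>U. inv g \<otimes> l u \<otimes> g = inv h \<otimes> m u \<otimes> h \<and> inv h \<otimes> m u \<otimes> h \<in> W"
        unfolding memA2 by auto
      define k where "k = g \<otimes> inv h"
      have kc: "k \<in> carrier G" using gh k_def by simp
      have g: "g = k \<otimes> h" using gh k_def by (simp add: m_assoc)
      have "k \<in> ?K" unfolding Kset_def
      proof (intro CollectI conjI ballI kc)
        fix u assume u: "u \<in> U"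
        have "inv h \<otimes> (inv k \<otimes> l u \<otimes> k) \<otimes> h = inv h \<otimes> m u \<otimes> h"
          using c u conj_mult[OF kc gh(2), of "l u"] l g by auto
        thus "inv k \<otimes> l u \<otimes> k = m u"
          using conj_cancel[OF gh(2), of "inv k \<otimes> l u \<otimes> k" "m u"] kc l m u by auto
      qed
      moreover have "h \<in> ?A1" using gh c by auto
      ultimately show "p \<in> (\<lambda>(k, h). (k \<otimes> h, h)) ` (?K \<times> ?A1)" using p g by force
    next
      assume "p \<in> (\<lambda>(k, h). (k \<otimes> h, h)) ` (?K \<times> ?A1)"
      then obtain k where k: "k \<in> ?K" and h: "h \<in> ?A1" and g: "g = k \<otimes> h" using p by auto
      have kc: "k \<in> carrier G" using k unfolding Kset_def by auto
      have hc: "h \<in> carrier G" using h by auto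
      have "\<forall>u\<in>U. inv g \<otimes> l u \<otimes> g = inv h \<otimes> m u \<otimes> h \<and> inv h \<otimes> m u \<otimes> h \<in> W"
      proof
        fix u assume u: "u \<in> U"
        have "inv g \<otimes> l u \<otimes> g = inv h \<otimes> (inv k \<otimes> l u \<otimes> k) \<otimes> h"
          using g conj_mult[OF kc hc, of "l u"] l u by auto
        also have "\<dots> = inv h \<otimes> m u \<otimes> h" using k u unfolding Kset_def by auto
        finally show "inv g \<otimes> l u \<otimes> g = inv h \<otimes> m u \<otimes> h \<and> inv h \<otimes> m u \<otimes> h \<in> W"
          using h u by auto
      qed
      moreover have gc: "g \<in> carrier G" using g kc hc by simp
      ultimately have "(g, h) \<in> ?A2" using hc by (intro memA2[THEN iffD2] conjI)
      thus "p \<in> ?A2" using p by (simp only:)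
    qed
  qed
  have inj: "inj_on (\<lambda>(k, h). (k \<otimes> h, h)) (?K \<times> ?A1)"
  proof (rule inj_onI)
    fix x y assume x: "x \<in> ?K \<times> ?A1" and y: "y \<in> ?K \<times> ?A1"
      and e: "(\<lambda>(k, h). (k \<otimes> h, h)) x = (\<lambda>(k, h). (k \<otimes> h, h)) y"
    obtain k h where xk: "x = (k, h)" by force
    obtain k' h' where yk: "y = (k', h')" by force
    have c: "k \<in> carrier G" "k' \<in> carrier G" "h \<in> carrier G"
      using x y xk yk unfolding Kset_def by auto
    have "h = h'" "k \<otimes> h = k' \<otimes> h'" using e xk yk by auto
    hence "k = k'" using c by simp
    thus "x = y" using xk yk \<open>h = h'\<close> by simp
  qed
  have "card ?A2 = card ?K * card ?A1"
  proof -
    have "card ?A2 = card (?K \<times> ?A1)" unfolding A2 by (rule card_image[OF inj])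
    thus ?thesis by (simp add: card_cartesian_product)
  qed
  hence "card (fixed_cosets (G \<times>\<times> G) (diag W) ?L) * card W = card ?K * card (fixed_cosets G W (m ` U)) * card W"
    using e1 e2 cd by (simp add: mult.assoc)
  moreover have "card W > 0" using W fin Wc subgroup.one_closed[OF W]
    by (metis card_gt_0_iff empty_iff finite_subset)
  ultimately show ?thesis by simp
qed


lemma hom_sub_iff:
  "l \<in> hom (G\<lparr>carrier := U\<rparr>) G \<longleftrightarrow> (\<forall>u\<in>U. l u \<in> carrier G) \<and>
     (\<forall>x\<in>U. \<forall>y\<in>U. l (x \<otimes>\<^bsub>G\<^esub> y) = l x \<otimes>\<^bsub>G\<^esub> l y)"
  by (auto simp: hom_def)

context group
begin

lemma invcl: "g \<in> carrier G \<Longrightarrow> z \<in> carrier G \<Longrightarrow> inv g \<otimes> (g \<otimes> z) = z"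
  by (simp add: m_assoc[symmetric])

lemma invcl2: "g \<in> carrier G \<Longrightarrow> z \<in> carrier G \<Longrightarrow> g \<otimes> (inv g \<otimes> z) = z"
  by (simp add: m_assoc[symmetric])

lemma markDelta_eq:
  assumes fin: "finite (carrier G)" and l: "l ` U \<subseteq> carrier G" and m: "m ` U \<subseteq> carrier G"
  shows "markDelta G c ((\<lambda>u. (l u, m u)) ` U) = of_nat (card (Kset G U l m)) * markB G c (m ` U)"
  unfolding markDelta_def markB_def sum_distrib_left
  by (rule sum.cong) (auto simp: card_fixed_diag[OF fin _ l m])

definition conjf :: "'a \<Rightarrow> ('a \<Rightarrow> 'a) \<Rightarrow> 'a set \<Rightarrow> ('a \<Rightarrow> 'a)" where
  "conjf g l U = restrict (\<lambda>u. g \<otimes> l u \<otimes> inv g) U"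

definition orb :: "('a \<Rightarrow> 'a) \<Rightarrow> 'a set \<Rightarrow> ('a \<Rightarrow> 'a) set" where
  "orb l U = {conjf g l U | g. g \<in> carrier G}"

lemma InjBar_orb: "InjBar G U = (\<lambda>l. orb l U) ` Inj G U"
  unfolding InjBar_def orb_def conjf_def by simp

lemma Inj_carrier: "l \<in> Inj G U \<Longrightarrow> u \<in> U \<Longrightarrow> l u \<in> carrier G"
  unfolding Inj_def hom_sub_iff by auto

lemma orb_self: "l \<in> Inj G U \<Longrightarrow> l \<in> orb l U"
proof -
  assume l: "l \<in> Inj G U"
  have "conjf \<one> l U = l"
  proof
    fix u show "conjf \<one> l U u = l u"
      using l Inj_carrier[OF l] unfolding conjf_def Inj_def by (auto simp: extensional_def)
  qed
  thus ?thesis unfolding orb_def by force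
qed

lemma conjf_Inj:
  assumes U: "subgroup U G" and l: "l \<in> Inj G U" and g: "g \<in> carrier G"
  shows "conjf g l U \<in> Inj G U"
proof -
  have lc: "\<And>u. u \<in> U \<Longrightarrow> l u \<in> carrier G" using Inj_carrier[OF l] .
  have hom: "\<forall>x\<in>U. \<forall>y\<in>U. l (x \<otimes> y) = l x \<otimes> l y" and inj: "inj_on l U"
    using l unfolding Inj_def hom_sub_iff by auto
  show ?thesis unfolding Inj_def mem_Collect_eq hom_sub_iff
  proof (intro conjI ballI)
    show "conjf g l U \<in> extensional U" unfolding conjf_def by simp
    fix u assume "u \<in> U" thus "conjf g l U u \<in> carrier G" using lc g unfolding conjf_def by simp
  next
    fix x y assume x: "x \<in> U" and y: "y \<in> U"
    have xy: "x \<otimes> y \<in> U" using subgroup.m_closed[OF U x y] .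
    show "conjf g l U (x \<otimes> y) = conjf g l U x \<otimes> conjf g l U y"
      using x y xy hom lc[OF x] lc[OF y] g unfolding conjf_def by (simp add: m_assoc invcl)
  next
    show "inj_on (conjf g l U) U"
    proof (rule inj_onI)
      fix x y assume x: "x \<in> U" and y: "y \<in> U" and e: "conjf g l U x = conjf g l U y"
      hence "g \<otimes> l x \<otimes> inv g = g \<otimes> l y \<otimes> inv g" unfolding conjf_def by simp
      hence "l x = l y" using lc[OF x] lc[OF y] g by simp
      thus "x = y" using inj x y by (simp add: inj_on_def)
    qed
  qed
qed


lemma conjf_conjf:
  assumes l: "l \<in> Inj G U" and g: "g \<in> carrier G" and h: "h \<in> carrier G"
  shows "conjf h (conjf g l U) U = conjf (h \<otimes> g) l U"
proof
  fix u show "conjf h (conjf g l U) U u = conjf (h \<otimes> g) l U u"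
    using Inj_carrier[OF l, of u] g h unfolding conjf_def by (simp add: m_assoc inv_mult_group)
qed

lemma orb_conjf:
  assumes l: "l \<in> Inj G U" and g: "g \<in> carrier G"
  shows "orb (conjf g l U) U = orb l U"
proof
  show "orb (conjf g l U) U \<subseteq> orb l U"
    unfolding orb_def using conjf_conjf[OF l g] g by auto
  show "orb l U \<subseteq> orb (conjf g l U) U"
  proof
    fix f assume "f \<in> orb l U"
    then obtain h where h: "h \<in> carrier G" and f: "f = conjf h l U" unfolding orb_def by auto
    have "h \<otimes> inv g \<otimes> g = h" using h g by (simp add: m_assoc)
    hence "f = conjf (h \<otimes> inv g) (conjf g l U) U" using conjf_conjf[OF l g, of "h \<otimes> inv g"] h g f by simp
    thus "f \<in> orb (conjf g l U) U" unfolding orb_def using h g by blast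
  qed
qed

lemma orb_mem:
  assumes U: "subgroup U G" and Lam: "Lam \<in> InjBar G U" and f: "f \<in> Lam"
  shows "f \<in> Inj G U" "orb f U = Lam"
proof -
  obtain l where l: "l \<in> Inj G U" and L: "Lam = orb l U" using Lam unfolding InjBar_orb by auto
  obtain g where g: "g \<in> carrier G" and fg: "f = conjf g l U" using f L unfolding orb_def by auto
  show "f \<in> Inj G U" using conjf_Inj[OF U l g] fg by simp
  show "orb f U = Lam" using orb_conjf[OF l g] fg L by simp
qed

lemma some_mem:
  assumes "Lam \<in> InjBar G U"
  shows "(SOME l. l \<in> Lam) \<in> Lam"
proof -
  obtain l where l: "l \<in> Inj G U" and L: "Lam = orb l U" using assms unfolding InjBar_orb by auto
  show ?thesis using orb_self[OF l] L by (metis someI)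
qed

lemma Kset_orb:
  assumes l: "l \<in> Inj G U" and m: "m \<in> Inj G U" and k: "k \<in> Kset G U l m"
  shows "orb m U = orb l U"
proof -
  have kc: "k \<in> carrier G" using k unfolding Kset_def by auto
  have "m = conjf (inv k) l U"
  proof
    fix u show "m u = conjf (inv k) l U u"
    proof (cases "u \<in> U")
      case True thus ?thesis using k kc unfolding Kset_def conjf_def by auto
    next
      case False thus ?thesis using m unfolding Inj_def conjf_def extensional_def by auto
    qed
  qed
  thus ?thesis using orb_conjf[OF l] kc by simp
qed

lemma conj_fix_iff:
  assumes k: "k \<in> carrier G" and x: "x \<in> carrier G"
  shows "inv k \<otimes> x \<otimes> k = x \<longleftrightarrow> k \<otimes> x = x \<otimes> k"
proof
  assume e: "inv k \<otimes> x \<otimes> k = x"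
  have "k \<otimes> (inv k \<otimes> x \<otimes> k) = x \<otimes> k" using k x by (simp add: m_assoc invcl2)
  thus "k \<otimes> x = x \<otimes> k" using e by simp
next
  assume e: "k \<otimes> x = x \<otimes> k"
  have "inv k \<otimes> x \<otimes> k = inv k \<otimes> (x \<otimes> k)" using k x by (simp add: m_assoc)
  also have "\<dots> = inv k \<otimes> (k \<otimes> x)" using e by simp
  also have "\<dots> = x" using k x by (simp add: invcl)
  finally show "inv k \<otimes> x \<otimes> k = x" .
qed

lemma Kset_self:
  assumes l: "l \<in> Inj G U"
  shows "Kset G U l l = centralizer_of G (l ` U)"
  unfolding Kset_def centralizer_of_def using conj_fix_iff Inj_carrier[OF l] by auto

lemma centralizer_subgroup:
  assumes S: "S \<subseteq> carrier G"
  shows "subgroup (centralizer_of G S) G"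
proof (rule subgroupI)
  show "centralizer_of G S \<subseteq> carrier G" unfolding centralizer_of_def by auto
  have "\<one> \<in> centralizer_of G S" unfolding centralizer_of_def using S by auto
  thus "centralizer_of G S \<noteq> {}" by blast
next
  fix a assume a: "a \<in> centralizer_of G S"
  hence ac: "a \<in> carrier G" unfolding centralizer_of_def by auto
  have "\<forall>x\<in>S. inv a \<otimes> x = x \<otimes> inv a"
  proof
    fix x assume x: "x \<in> S"
    hence xc: "x \<in> carrier G" using S by auto
    have e: "a \<otimes> x = x \<otimes> a" using a x unfolding centralizer_of_def by auto
    have "inv a \<otimes> x \<otimes> a = x" using conj_fix_iff[OF ac xc] e by simp
    hence "inv a \<otimes> x \<otimes> a \<otimes> inv a = x \<otimes> inv a" by simp
    thus "inv a \<otimes> x = x \<otimes> inv a" using ac xc by (simp add: m_assoc)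
  qed
  thus "inv a \<in> centralizer_of G S" using ac unfolding centralizer_of_def by auto
next
  fix a b assume a: "a \<in> centralizer_of G S" and b: "b \<in> centralizer_of G S"
  hence ac: "a \<in> carrier G" and bc: "b \<in> carrier G" unfolding centralizer_of_def by auto
  have "\<forall>x\<in>S. a \<otimes> b \<otimes> x = x \<otimes> (a \<otimes> b)"
  proof
    fix x assume x: "x \<in> S"
    hence xc: "x \<in> carrier G" using S by auto
    have ea: "a \<otimes> x = x \<otimes> a" and eb: "b \<otimes> x = x \<otimes> b" using a b x unfolding centralizer_of_def by auto
    have "a \<otimes> b \<otimes> x = a \<otimes> (x \<otimes> b)" using ac bc xc eb by (simp add: m_assoc)
    also have "\<dots> = (a \<otimes> x) \<otimes> b" using ac bc xc by (simp add: m_assoc)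
    also have "\<dots> = x \<otimes> (a \<otimes> b)" using ac bc xc ea by (simp add: m_assoc)
    finally show "a \<otimes> b \<otimes> x = x \<otimes> (a \<otimes> b)" .
  qed
  thus "a \<otimes> b \<in> centralizer_of G S" using ac bc unfolding centralizer_of_def by auto
qed

lemma of_nat_card_subgroup_ne0:
  assumes H: "subgroup H G" and o: "(of_nat (order G) :: 'k::field) \<noteq> 0"
  shows "(of_nat (card H) :: 'k) \<noteq> 0"
  using lagrange[OF H] o by (metis of_nat_mult mult_zero_right)

lemma conj_img_comp:
  assumes A: "A \<subseteq> carrier G" and g: "g \<in> carrier G" and h: "h \<in> carrier G"
  shows "(\<lambda>x. g \<otimes> x \<otimes> inv g) ` ((\<lambda>x. h \<otimes> x \<otimes> inv h) ` A) = (\<lambda>x. (g \<otimes> h) \<otimes> x \<otimes> inv (g \<otimes> h)) ` A"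
  unfolding image_image
  by (rule image_cong) (use A g h in \<open>auto simp: m_assoc inv_mult_group\<close>)

lemma conj_img_one:
  assumes A: "A \<subseteq> carrier G"
  shows "(\<lambda>x. \<one> \<otimes> x \<otimes> inv \<one>) ` A = A"
proof -
  have "(\<lambda>x. \<one> \<otimes> x \<otimes> inv \<one>) ` A = (\<lambda>x. x) ` A" by (rule image_cong) (use A in auto)
  thus ?thesis by simp
qed

lemma conjugate_conj1:
  assumes V: "V \<subseteq> carrier G" and g: "g \<in> carrier G" and c: "conjugate G A V"
  shows "conjugate G ((\<lambda>x. g \<otimes> x \<otimes> inv g) ` A) V"
proof -
  obtain h where h: "h \<in> carrier G" and A: "A = (\<lambda>v. h \<otimes> v \<otimes> inv h) ` V"
    using c unfolding conjugate_def by auto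
  show ?thesis unfolding conjugate_def A conj_img_comp[OF V g h] using g h by blast
qed

lemma conjugate_conj:
  assumes A: "A \<subseteq> carrier G" and V: "V \<subseteq> carrier G" and g: "g \<in> carrier G"
  shows "conjugate G ((\<lambda>x. g \<otimes> x \<otimes> inv g) ` A) V \<longleftrightarrow> conjugate G A V"
proof
  assume c: "conjugate G ((\<lambda>x. g \<otimes> x \<otimes> inv g) ` A) V"
  have "conjugate G ((\<lambda>x. inv g \<otimes> x \<otimes> inv (inv g)) ` ((\<lambda>x. g \<otimes> x \<otimes> inv g) ` A)) V"
    by (rule conjugate_conj1[OF V _ c]) (use g in simp)
  also have "(\<lambda>x. inv g \<otimes> x \<otimes> inv (inv g)) ` ((\<lambda>x. g \<otimes> x \<otimes> inv g) ` A) = A"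
    using conj_img_comp[OF A inv_closed[OF g] g] conj_img_one[OF A] g by simp
  finally show "conjugate G A V" .
next
  assume "conjugate G A V"
  thus "conjugate G ((\<lambda>x. g \<otimes> x \<otimes> inv g) ` A) V" by (rule conjugate_conj1[OF V g])
qed

lemma conjf_img:
  "conjf g l U ` U = (\<lambda>x. g \<otimes> x \<otimes> inv g) ` (l ` U)"
  unfolding conjf_def image_image by (rule image_cong) auto

end

context group
begin

lemma img_subgroup_Inj:
  assumes U: "subgroup U G" and m: "m \<in> Inj G U"
  shows "subgroup (m ` U) G"
proof -
  have gU: "group (G\<lparr>carrier := U\<rparr>)" using subgroup.subgroup_is_group[OF U is_group] .
  have "group_hom (G\<lparr>carrier := U\<rparr>) G m"
    using gU m is_group unfolding group_hom_def group_hom_axioms_def Inj_def by auto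
  from group_hom.img_is_subgroup[OF this] show ?thesis by simp
qed

lemma entry_formula:
  assumes fin: "finite (carrier G)" and o: "(of_nat (order G) :: 'k::field) \<noteq> 0"
    and U: "subgroup U G" and V: "subgroup V G"
    and e_V: "\<forall>V'. subgroup V' G \<longrightarrow> markB G c V' = (if conjugate G V' V then 1 else (0::'k))"
    and Lam: "Lam \<in> InjBar G U" and M: "M \<in> InjBar G U"
  shows "sigma_entry G c U Lam M = (if Lam = M \<and> conjugate G ((SOME l. l \<in> Lam) ` U) V then 1 else 0)"
proof -
  define l where "l = (SOME l. l \<in> Lam)"
  define m where "m = (SOME m. m \<in> M)"
  have lL: "l \<in> Lam" unfolding l_def by (rule some_mem[OF Lam])
  have mM: "m \<in> M" unfolding m_def by (rule some_mem[OF M])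
  have lI: "l \<in> Inj G U" and ol: "orb l U = Lam" using orb_mem[OF U Lam lL] by auto
  have mI: "m \<in> Inj G U" and om: "orb m U = M" using orb_mem[OF U M mM] by auto
  have lc: "l ` U \<subseteq> carrier G" using Inj_carrier[OF lI] by auto
  have mc: "m ` U \<subseteq> carrier G" using Inj_carrier[OF mI] by auto
  have mB: "markB G c (m ` U) = (if conjugate G (m ` U) V then 1 else 0)"
    using e_V img_subgroup_Inj[OF U mI] by blast
  have se: "sigma_entry G c U Lam M = of_nat (card (Kset G U l m)) * markB G c (m ` U)
      / of_nat (card (centralizer_of G (l ` U)))"
    unfolding sigma_entry_def Let_def l_def[symmetric] m_def[symmetric] markDelta_eq[OF fin lc mc] ..
  show ?thesis
  proof (cases "Lam = M")
    case True
    hence ml: "m = l" unfolding l_def m_def by simp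
    have ne: "(of_nat (card (centralizer_of G (l ` U))) :: 'k) \<noteq> 0"
      by (rule of_nat_card_subgroup_ne0[OF centralizer_subgroup[OF lc] o])
    show ?thesis unfolding se ml Kset_self[OF lI] l_def[symmetric] using mB[unfolded ml] True ne by simp
  next
    case False
    have "Kset G U l m = {}"
    proof (rule ccontr)
      assume "Kset G U l m \<noteq> {}"
      then obtain k where "k \<in> Kset G U l m" by blast
      from Kset_orb[OF lI mI this] ol om False show False by simp
    qed
    thus ?thesis unfolding se using False by simp
  qed
qed

lemma finite_InjBar:
  assumes fin: "finite (carrier G)" and U: "subgroup U G"
  shows "finite (InjBar G U)"
proof -
  have Uf: "finite U" using fin subgroup.subset[OF U] finite_subset by blast
  have sub: "Inj G U \<subseteq> PiE U (\<lambda>_. carrier G)"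
  proof
    fix l assume l: "l \<in> Inj G U"
    have "l \<in> extensional U" using l unfolding Inj_def by simp
    thus "l \<in> PiE U (\<lambda>_. carrier G)" using Inj_carrier[OF l] by (simp add: PiE_iff)
  qed
  have "finite (PiE U (\<lambda>_. carrier G))" by (rule finite_PiE[OF Uf]) (rule fin)
  hence "finite (Inj G U)" by (rule finite_subset[OF sub])
  thus ?thesis unfolding InjBar_orb by simp
qed

lemma exists_iff:
  assumes U: "subgroup U G" and V: "subgroup V G" and Lam: "Lam \<in> InjBar G U"
  shows "(\<exists>l\<in>Lam. conjugate G (l ` U) V) \<longleftrightarrow> conjugate G ((SOME l. l \<in> Lam) ` U) V"
proof
  define l where "l = (SOME l. l \<in> Lam)"
  have lL: "l \<in> Lam" unfolding l_def by (rule some_mem[OF Lam])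
  have lI: "l \<in> Inj G U" and ol: "orb l U = Lam" using orb_mem[OF U Lam lL] by auto
  have lc: "l ` U \<subseteq> carrier G" using Inj_carrier[OF lI] by auto
  have Vc: "V \<subseteq> carrier G" using subgroup.subset[OF V] .
  assume "\<exists>l\<in>Lam. conjugate G (l ` U) V"
  then obtain l' where l': "l' \<in> Lam" and c: "conjugate G (l' ` U) V" by blast
  obtain g where g: "g \<in> carrier G" and lg: "l' = conjf g l U" using l' ol unfolding orb_def by auto
  have "conjugate G (l ` U) V" using c unfolding lg conjf_img conjugate_conj[OF lc Vc g] .
  thus "conjugate G ((SOME l. l \<in> Lam) ` U) V" unfolding l_def .
next
  assume "conjugate G ((SOME l. l \<in> Lam) ` U) V"
  thus "\<exists>l\<in>Lam. conjugate G (l ` U) V" using some_mem[OF Lam] by blast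
qed

lemma main_formula:
  assumes fin: "finite (carrier G)" and o: "(of_nat (order G) :: 'k::field) \<noteq> 0"
    and U: "subgroup U G" and V: "subgroup V G"
    and e_V: "\<forall>V'. subgroup V' G \<longrightarrow> markB G c V' = (if conjugate G V' V then 1 else (0::'k))"
  shows "sigma_apply G c U x =
     (\<lambda>Lam. if Lam \<in> InjBar G U \<and> (\<exists>l\<in>Lam. conjugate G (l ` U) V) then x Lam else 0)"
proof
  fix Lam
  show "sigma_apply G c U x Lam =
     (if Lam \<in> InjBar G U \<and> (\<exists>l\<in>Lam. conjugate G (l ` U) V) then x Lam else 0)"
  proof (cases "Lam \<in> InjBar G U")
    case False thus ?thesis unfolding sigma_apply_def by simp
  next
    case True
    let ?P = "conjugate G ((SOME l. l \<in> Lam) ` U) V"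
    have "sigma_apply G c U x Lam = (\<Sum>M\<in>InjBar G U. x M * sigma_entry G c U Lam M)"
      unfolding sigma_apply_def using True by simp
    also have "\<dots> = (\<Sum>M\<in>InjBar G U. if M = Lam then (if ?P then x M else 0) else 0)"
      by (rule sum.cong) (auto simp: entry_formula[OF fin o U V e_V True])
    also have "\<dots> = (if ?P then x Lam else 0)"
      using sum.delta[OF finite_InjBar[OF fin U], of Lam "\<lambda>M. if ?P then x M else 0"] True by simp
    finally show ?thesis using exists_iff[OF U V True] True by simp
  qed
qed

lemma iso_of_conj:
  assumes U: "subgroup U G" and V: "subgroup V G" and l: "l \<in> Inj G U"
    and c: "conjugate G (l ` U) V"
  shows "G\<lparr>carrier := U\<rparr> \<cong> G\<lparr>carrier := V\<rparr>"
proof -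
  obtain g where g: "g \<in> carrier G" and lU: "l ` U = (\<lambda>v. g \<otimes> v \<otimes> inv g) ` V"
    using c unfolding conjugate_def by auto
  have Vc: "V \<subseteq> carrier G" using subgroup.subset[OF V] .
  have lc: "\<And>u. u \<in> U \<Longrightarrow> l u \<in> carrier G" using Inj_carrier[OF l] .
  have hom: "\<forall>x\<in>U. \<forall>y\<in>U. l (x \<otimes> y) = l x \<otimes> l y" and inj: "inj_on l U"
    using l unfolding Inj_def hom_sub_iff by auto
  define phi where "phi = (\<lambda>u. inv g \<otimes> l u \<otimes> g)"
  have bk: "\<And>v. v \<in> carrier G \<Longrightarrow> inv g \<otimes> (g \<otimes> v \<otimes> inv g) \<otimes> g = v"
    using g by (simp add: m_assoc invcl)
  have phiV: "phi u \<in> V" if u: "u \<in> U" for u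
  proof -
    have "l u \<in> (\<lambda>v. g \<otimes> v \<otimes> inv g) ` V" using lU u by blast
    then obtain v where v: "v \<in> V" and lv: "l u = g \<otimes> v \<otimes> inv g" by blast
    show ?thesis unfolding phi_def lv using bk[of v] v Vc by auto
  qed
  have "phi \<in> iso (G\<lparr>carrier := U\<rparr>) (G\<lparr>carrier := V\<rparr>)"
    unfolding iso_def hom_def
  proof (intro CollectI conjI)
    show "phi \<in> carrier (G\<lparr>carrier := U\<rparr>) \<rightarrow> carrier (G\<lparr>carrier := V\<rparr>)" using phiV by auto
    show "\<forall>x\<in>carrier (G\<lparr>carrier := U\<rparr>). \<forall>y\<in>carrier (G\<lparr>carrier := U\<rparr>).
        phi (x \<otimes>\<^bsub>G\<lparr>carrier := U\<rparr>\<^esub> y) = phi x \<otimes>\<^bsub>G\<lparr>carrier := V\<rparr>\<^esub> phi y"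
    proof (intro ballI)
      fix x y assume x: "x \<in> carrier (G\<lparr>carrier := U\<rparr>)" and y: "y \<in> carrier (G\<lparr>carrier := U\<rparr>)"
      hence x': "x \<in> U" and y': "y \<in> U" by auto
      show "phi (x \<otimes>\<^bsub>G\<lparr>carrier := U\<rparr>\<^esub> y) = phi x \<otimes>\<^bsub>G\<lparr>carrier := V\<rparr>\<^esub> phi y"
        using hom x' y' lc[OF x'] lc[OF y'] g unfolding phi_def by (simp add: m_assoc invcl2)
    qed
    show "bij_betw phi (carrier (G\<lparr>carrier := U\<rparr>)) (carrier (G\<lparr>carrier := V\<rparr>))"
      unfolding bij_betw_def
    proof (intro conjI)
      show "inj_on phi (carrier (G\<lparr>carrier := U\<rparr>))"
      proof (rule inj_onI)
        fix x y assume x: "x \<in> carrier (G\<lparr>carrier := U\<rparr>)" and y: "y \<in> carrier (G\<lparr>carrier := U\<rparr>)"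
          and e: "phi x = phi y"
        hence x': "x \<in> U" and y': "y \<in> U" by auto
        have "l x = l y" using conj_cancel[OF g lc[OF x'] lc[OF y']] e unfolding phi_def by simp
        thus "x = y" using inj x' y' by (simp add: inj_on_def)
      qed
      show "phi ` carrier (G\<lparr>carrier := U\<rparr>) = carrier (G\<lparr>carrier := V\<rparr>)"
      proof
        show "phi ` carrier (G\<lparr>carrier := U\<rparr>) \<subseteq> carrier (G\<lparr>carrier := V\<rparr>)" using phiV by auto
        show "carrier (G\<lparr>carrier := V\<rparr>) \<subseteq> phi ` carrier (G\<lparr>carrier := U\<rparr>)"
        proof
          fix v assume "v \<in> carrier (G\<lparr>carrier := V\<rparr>)"
          hence v: "v \<in> V" by simp
          hence "g \<otimes> v \<otimes> inv g \<in> l ` U" using lU by blast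
          then obtain u where u: "u \<in> U" and lu: "l u = g \<otimes> v \<otimes> inv g" by force
          have "phi u = v" unfolding phi_def lu using bk[of v] v Vc by auto
          thus "v \<in> phi ` carrier (G\<lparr>carrier := U\<rparr>)" using u by force
        qed
      qed
    qed
  qed
  thus ?thesis by (rule is_isoI)
qed

end

theorem proposition3p7:
  fixes G :: "('g, 'b) monoid_scheme" and c :: "'g set \<Rightarrow> 'k::field" and V :: "'g set"
  assumes "group G" and "finite (carrier G)" and "(of_nat (order G) :: 'k) \<noteq> 0"
    and "subgroup V G"
    and e_V: "\<forall>V'. subgroup V' G \<longrightarrow> markB G c V' = (if conjugate G V' V then 1 else 0)"
  shows "(\<forall>U. subgroup U G \<and> \<not> (G\<lparr>carrier := U\<rparr> \<cong> G\<lparr>carrier := V\<rparr>) \<longrightarrow>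
            (\<forall>x. sigma_apply G c U x = (\<lambda>_. 0)))
       \<and> (\<forall>U. subgroup U G \<and> (G\<lparr>carrier := U\<rparr> \<cong> G\<lparr>carrier := V\<rparr>) \<longrightarrow>
            (\<forall>x. sigma_apply G c U x =
               (\<lambda>Lam. if Lam \<in> InjBar G U \<and> (\<exists>l\<in>Lam. conjugate G (l ` U) V) then x Lam else 0)))"
proof -
  interpret group G by fact
  have MF: "\<And>U x. subgroup U G \<Longrightarrow> sigma_apply G c U x =
     (\<lambda>Lam. if Lam \<in> InjBar G U \<and> (\<exists>l\<in>Lam. conjugate G (l ` U) V) then x Lam else 0)"
    using main_formula[OF assms(2) assms(3) _ assms(4) e_V] by blast
  show ?thesis
  proof (intro conjI allI impI)
    fix U x assume h: "subgroup U G \<and> \<not> (G\<lparr>carrier := U\<rparr> \<cong> G\<lparr>carrier := V\<rparr>)"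
    hence U: "subgroup U G" by simp
    have nP: "\<not> (Lam \<in> InjBar G U \<and> (\<exists>l\<in>Lam. conjugate G (l ` U) V))" for Lam
    proof
      assume "Lam \<in> InjBar G U \<and> (\<exists>l\<in>Lam. conjugate G (l ` U) V)"
      then obtain l where Lam: "Lam \<in> InjBar G U" and lL: "l \<in> Lam" and cl: "conjugate G (l ` U) V" by blast
      have "l \<in> Inj G U" using orb_mem[OF U Lam lL] by simp
      from iso_of_conj[OF U assms(4) this cl] h show False by simp
    qed
    show "sigma_apply G c U x = (\<lambda>_. 0)" unfolding MF[OF U]
    proof (rule ext)
      fix Lam show "(if Lam \<in> InjBar G U \<and> (\<exists>l\<in>Lam. conjugate G (l ` U) V) then x Lam else 0) = 0"
        using nP[of Lam] by auto
    qed
  next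
    fix U x assume h: "subgroup U G \<and> (G\<lparr>carrier := U\<rparr> \<cong> G\<lparr>carrier := V\<rparr>)"
    thus "sigma_apply G c U x =
          (\<lambda>Lam. if Lam \<in> InjBar G U \<and> (\<exists>l\<in>Lam. conjugate G (l ` U) V) then x Lam else 0)"
      using MF by simp
  qed
qed

end
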